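(* For any word $w=z_{k_1}\cdots z_{k_n}$ of length $n\geq 1$ and weight $k=k_1+\cdots+k_n$, \[\frac{d}{dt}S^t(C(w))=\begin{cases}0&(n=1),\\ S^t(C(\delta(w)))&(n\geq 2),\end{cases}\qquad \frac{d}{dt}S^t(\Sigma(w))=\begin{cases}(k-1)z_{k+1}&(n=1),\\ S^t(\Sigma(\delta(w)))-S^t(C(w))&(n\geq 2).\end{cases}\]
   Context: Multiple zeta setting: $\mathfrak{h}^1$ is the non-commutative polynomial algebra over $\mathbb{Q}$ in letters $z_k$ ($k\geq1$), with $z_k\circ z_l=z_{k+l}$ on the span of letters, acting on words by $a\circ 1=0$, $a\circ(bw)=(a\circ b)w$. For an indeterminate $t$, the $\mathbb{Q}[t]$-linear operator $S^t$ on $\mathfrak{h}^1[t]$ is defined by $S^t(1)=1$, $S^t(aw)=aS^t(w)+t\,a\circ S^t(w)$. For a word $w=z_{k_1}\cdots z_{k_n}$ with $n\geq1$, define $C(w)=\sum_{l=1}^n z_{k_l+1}z_{k_{l+1}}\cdots z_{k_n}z_{k_1}\cdots z_{k_{l-1}}$, $\Sigma(w)=\sum_{l=1}^n\sum_{j=1}^{k_l-1}z_{k_l+1-j}z_{k_{l+1}}\cdots z_{k_n}z_{k_1}\cdots z_{k_{l-1}}z_j$, and, if $n\geq 2$ (with $k_{n+1}:=k_1$), $\delta(w)=\sum_{l=1}^n z_{k_l+k_{l+1}}z_{k_{l+2}}\cdots z_{k_n}z_{k_1}\cdots z_{k_{l-1}}$ (for $l=n$ this is $z_{k_n+k_1}z_{k_2}\cdots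 z_{k_{n-1}}$). These are extended $\mathbb{Q}[t]$-linearly. *)

theory Defs
  imports "HOL-Library.Poly_Mapping" "HOL-Computational_Algebra.Polynomial"
begin

text \<open>Words z_{k_1}...z_{k_n} are lists [k_1,...,k_n] of positive naturals.
Elements of h^1[t] are finitely supported Q[t]-linear combinations of words.\<close>

type_synonym word = "nat list"
type_synonym elt = "word \<Rightarrow>\<^sub>0 rat poly"

definition mono :: "word \<Rightarrow> elt" where
  "mono w = Poly_Mapping.single w 1"

definition scal :: "rat poly \<Rightarrow> elt \<Rightarrow> elt" where
  "scal c x = Poly_Mapping.map (\<lambda>q. c * q) x"

definition lin :: "(word \<Rightarrow> elt) \<Rightarrow> elt \<Rightarrow> elt" where
  "lin f x = (\<Sum>u\<in>Poly_Mapping.keys x. scal (Poly_Mapping.lookup x u) (f u))"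

definition lmul :: "nat \<Rightarrow> elt \<Rightarrow> elt" where
  "lmul a = lin (\<lambda>u. mono (a # u))"

definition circ :: "nat \<Rightarrow> elt \<Rightarrow> elt" where
  "circ a = lin (\<lambda>u. case u of [] \<Rightarrow> 0 | l # u' \<Rightarrow> mono ((a + l) # u'))"

fun St_word :: "word \<Rightarrow> elt" where
  "St_word [] = mono []"
| "St_word (a # w) = lmul a (St_word w) + scal [:0, 1:] (circ a (St_word w))"

definition St :: "elt \<Rightarrow> elt" where
  "St = lin St_word"

definition ddt :: "elt \<Rightarrow> elt" where
  "ddt x = Poly_Mapping.map pderiv x"

definition C_word :: "word \<Rightarrow> elt" where
  "C_word w = (\<Sum>i<length w. let r = rotate i w in mono ((hd r + 1) # tl r))"

definition Sigma_word :: "word \<Rightarrow> elt" where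
  "Sigma_word w = (\<Sum>i<length w. let r = rotate i w in
      (\<Sum>j\<in>{1..<hd r}. mono ((hd r + 1 - j) # tl r @ [j])))"

definition delta_word :: "word \<Rightarrow> elt" where
  "delta_word w = (\<Sum>i<length w. let r = rotate i w in
      mono ((r ! 0 + r ! 1) # drop 2 r))"

definition Cop :: "elt \<Rightarrow> elt" where "Cop = lin C_word"
definition Sigmaop :: "elt \<Rightarrow> elt" where "Sigmaop = lin Sigma_word"
definition deltaop :: "elt \<Rightarrow> elt" where "deltaop = lin delta_word"

end

theory Submission
  imports Defs
begin


lemma lookup_scal[simp]: "Poly_Mapping.lookup (scal c x) u = c * Poly_Mapping.lookup x u"
  by (simp add: scal_def map.rep_eq when_def)

lemma scal_add: "scal c (x + y) = scal c x + scal c y"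
  by (rule poly_mapping_eqI) (simp add: lookup_add algebra_simps)
lemma scal_add2: "scal (c + d) x = scal c x + scal d x"
  by (rule poly_mapping_eqI) (simp add: lookup_add algebra_simps)
lemma scal_zero[simp]: "scal c 0 = 0" "scal 0 x = 0"
  by (rule poly_mapping_eqI, simp)+
lemma scal_one[simp]: "scal 1 x = x"
  by (rule poly_mapping_eqI) simp
lemma scal_scal: "scal c (scal d x) = scal (c * d) x"
  by (rule poly_mapping_eqI) (simp add: algebra_simps)
lemma scal_sum: "scal c (sum f A) = (\<Sum>a\<in>A. scal c (f a))"
  by (rule poly_mapping_eqI) (simp add: lookup_sum sum_distrib_left)
lemma scal_sum2: "scal (sum f A) x = (\<Sum>a\<in>A. scal (f a) x)"
  by (rule poly_mapping_eqI) (simp add: lookup_sum sum_distrib_right)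
lemma scal_minus: "scal c (x - y) = scal c x - scal c y"
  by (rule poly_mapping_eqI) (simp add: lookup_minus algebra_simps)
lemma scal_minus2: "scal (c - d) x = scal c x - scal d x"
  by (rule poly_mapping_eqI) (simp add: lookup_minus algebra_simps)

lemma keys_scal: "Poly_Mapping.keys (scal c x) \<subseteq> Poly_Mapping.keys x"
  by (auto simp: in_keys_iff)

lemma lin_alt:
  assumes "finite A" "Poly_Mapping.keys x \<subseteq> A"
  shows "lin f x = (\<Sum>u\<in>A. scal (Poly_Mapping.lookup x u) (f u))"
  unfolding lin_def
  by (rule sum.mono_neutral_left) (use assms in \<open>auto simp: in_keys_iff\<close>)

lemma lin_add: "lin f (x + y) = lin f x + lin f y"
proof -
  let ?A = "Poly_Mapping.keys x \<union> Poly_Mapping.keys y"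
  have "lin f (x + y) = (\<Sum>u\<in>?A. scal (Poly_Mapping.lookup (x+y) u) (f u))"
    by (rule lin_alt) (auto dest: keys_add[THEN subsetD])
  also have "\<dots> = (\<Sum>u\<in>?A. scal (Poly_Mapping.lookup x u) (f u)) + (\<Sum>u\<in>?A. scal (Poly_Mapping.lookup y u) (f u))"
    by (simp add: lookup_add scal_add2 sum.distrib)
  also have "\<dots> = lin f x + lin f y"
    by (subst (1 2) lin_alt[of ?A]) auto
  finally show ?thesis .
qed

lemma lin_zero[simp]: "lin f 0 = 0"
  by (simp add: lin_def)

lemma lin_sum: "lin f (sum g A) = (\<Sum>a\<in>A. lin f (g a))"
  by (induction A rule: infinite_finite_induct) (auto simp: lin_add)

lemma lin_uminus: "lin f (- x) = - lin f x"
  by (metis add_eq_0_iff lin_add lin_zero neg_eq_iff_add_eq_0)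

lemma lin_diff: "lin f (x - y) = lin f x - lin f y"
  by (metis diff_conv_add_uminus lin_add lin_uminus)

lemma lin_scal: "lin f (scal c x) = scal c (lin f x)"
proof -
  have "lin f (scal c x) = (\<Sum>u\<in>Poly_Mapping.keys x. scal (c * Poly_Mapping.lookup x u) (f u))"
    by (subst lin_alt[of "Poly_Mapping.keys x"]) (auto simp: keys_scal)
  then show ?thesis by (simp add: lin_def scal_sum scal_scal)
qed

lemma lin_mono[simp]: "lin f (mono u) = f u"
  by (simp add: lin_def mono_def)

lemma lin_comp: "lin f (lin g x) = lin (\<lambda>u. lin f (g u)) x"
proof -
  have "lin f (lin g x) = lin f (\<Sum>u\<in>Poly_Mapping.keys x. scal (Poly_Mapping.lookup x u) (g u))"
    by (simp only: lin_def[of g])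
  also have "\<dots> = (\<Sum>u\<in>Poly_Mapping.keys x. scal (Poly_Mapping.lookup x u) (lin f (g u)))"
    by (simp add: lin_sum lin_scal)
  finally show ?thesis by (simp add: lin_def[of "\<lambda>u. lin f (g u)"])
qed

lemma lin_plus_fun: "lin f x + lin g x = lin (\<lambda>u. f u + g u) x"
  by (simp add: lin_def scal_add sum.distrib)

lemma lin_minus_fun: "lin f x - lin g x = lin (\<lambda>u. f u - g u) x"
  by (simp add: lin_def scal_minus sum_subtractf)

lemma scal_lin: "scal c (lin f x) = lin (\<lambda>u. scal c (f u)) x"
  by (simp add: lin_def scal_sum scal_scal mult.commute)

lemma lin_cong: "(\<And>u. u \<in> Poly_Mapping.keys x \<Longrightarrow> f u = g u) \<Longrightarrow> lin f x = lin g x"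
  by (simp add: lin_def)

lemma lin_const0[simp]: "lin (\<lambda>u. 0) x = 0"
  by (simp add: lin_def)

lemma pderiv_sum': "pderiv (sum f A) = (\<Sum>a\<in>A. pderiv (f a))"
  by (induction A rule: infinite_finite_induct) (auto simp: pderiv_add)
lemma lookup_ddt[simp]: "Poly_Mapping.lookup (ddt x) u = pderiv (Poly_Mapping.lookup x u)"
  by (simp add: ddt_def map.rep_eq when_def)
lemma ddt_add: "ddt (x + y) = ddt x + ddt y"
  by (rule poly_mapping_eqI) (simp add: lookup_add pderiv_add)
lemma ddt_zero[simp]: "ddt 0 = 0"
  by (rule poly_mapping_eqI) simp
lemma ddt_sum: "ddt (sum f A) = (\<Sum>a\<in>A. ddt (f a))"
  by (rule poly_mapping_eqI) (simp add: lookup_sum pderiv_sum')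
lemma ddt_mono[simp]: "ddt (mono u) = 0"
  by (rule poly_mapping_eqI) (simp add: mono_def lookup_single when_def)
lemma ddt_scal: "ddt (scal c x) = scal (pderiv c) x + scal c (ddt x)"
  by (rule poly_mapping_eqI) (simp add: lookup_add pderiv_mult algebra_simps)
lemma keys_ddt: "Poly_Mapping.keys (ddt x) \<subseteq> Poly_Mapping.keys x"
  by (auto simp: in_keys_iff)

lemma ddt_lin:
  assumes "\<And>u. ddt (f u) = 0"
  shows "ddt (lin f x) = lin f (ddt x)"
proof -
  have "ddt (lin f x) = (\<Sum>u\<in>Poly_Mapping.keys x. scal (pderiv (Poly_Mapping.lookup x u)) (f u))"
    by (simp add: lin_def ddt_sum ddt_scal assms)
  also have "\<dots> = lin f (ddt x)"
    by (subst lin_alt[of "Poly_Mapping.keys x"]) (auto simp: keys_ddt)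
  finally show ?thesis .
qed



definition merge :: "nat \<Rightarrow> word \<Rightarrow> word" where
  "merge q v = take q v @ (v!q + v!(q+1)) # drop (q+2) v"

definition Dw :: "word \<Rightarrow> elt" where
  "Dw v = (\<Sum>q<length v - 1. mono (merge q v))"

lemma merge_Suc[simp]: "merge (Suc q) (a # v) = a # merge q v"
  by (simp add: merge_def)
lemma merge_0[simp]: "merge 0 (a # b # v) = (a + b) # v"
  by (simp add: merge_def)
lemma merge_app: "merge (length xs) (xs @ a # b # ys) = xs @ (a + b) # ys"
  by (simp add: merge_def nth_append)

lemma lmul_mono[simp]: "lmul a (mono u) = mono (a # u)"
  by (simp add: lmul_def)
lemma circ_mono_Nil[simp]: "circ a (mono []) = 0"
  by (simp add: circ_def)
lemma circ_mono_Cons[simp]: "circ a (mono (b # u)) = mono ((a + b) # u)"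
  by (simp add: circ_def)
lemma St_mono[simp]: "St (mono u) = St_word u"
  by (simp add: St_def)

lemma lmul_add: "lmul a (x + y) = lmul a x + lmul a y" by (simp add: lmul_def lin_add)
lemma circ_add: "circ a (x + y) = circ a x + circ a y" by (simp add: circ_def lin_add)
lemma St_add: "St (x + y) = St x + St y" by (simp add: St_def lin_add)
lemma St_diff: "St (x - y) = St x - St y" by (simp add: St_def lin_diff)
lemma St_sum: "St (sum f A) = (\<Sum>a\<in>A. St (f a))" by (simp add: St_def lin_sum)
lemma lmul_sum: "lmul a (sum f A) = (\<Sum>x\<in>A. lmul a (f x))" by (simp add: lmul_def lin_sum)
lemma circ_scal: "circ a (scal c x) = scal c (circ a x)" by (simp add: circ_def lin_scal)
lemma lmul_zero[simp]: "lmul a 0 = 0" by (simp add: lmul_def)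
lemma St_zero[simp]: "St 0 = 0" by (simp add: St_def)

lemma ddt_lmul: "ddt (lmul a x) = lmul a (ddt x)"
  unfolding lmul_def by (rule ddt_lin) simp
lemma ddt_circ: "ddt (circ a x) = circ a (ddt x)"
  unfolding circ_def by (rule ddt_lin) (simp split: list.split)

lemma St_lmul: "St (lmul a x) = lmul a (St x) + scal [:0,1:] (circ a (St x))"
proof -
  have "St (lmul a x) = lin (\<lambda>u. St_word (a # u)) x"
    by (simp add: St_def lmul_def lin_comp)
  moreover have "lmul a (St x) = lin (\<lambda>u. lmul a (St_word u)) x"
    by (simp add: St_def lmul_def[of a] lin_comp)
  moreover have "circ a (St x) = lin (\<lambda>u. circ a (St_word u)) x"
    by (simp add: St_def circ_def[of a] lin_comp)
  ultimately show ?thesis by (simp add: scal_lin lin_plus_fun)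
qed

lemma circ_lmul: "circ a (lmul b x) = lmul (a + b) x"
  by (simp add: lmul_def circ_def[of a] lin_comp)

lemma circ_circ: "circ a (circ b x) = circ (a + b) x"
proof -
  have "circ a (circ b x) = lin (\<lambda>u. circ a (case u of [] \<Rightarrow> 0 | l # u' \<Rightarrow> mono ((b + l) # u'))) x"
    by (simp only: circ_def[of b] circ_def[of a] lin_comp)
  also have "\<dots> = circ (a + b) x"
    unfolding circ_def[of "a+b"]
    by (rule lin_cong) (simp add: circ_def add.assoc split: list.split)
  finally show ?thesis .
qed

lemma ddt_St_word: "ddt (St_word v) = St (Dw v)"
proof (induction v)
  case Nil
  then show ?case by (simp add: Dw_def)
next
  case (Cons a w)
  have pd: "pderiv [:0, 1::rat:] = 1" by (simp add: pderiv_pCons)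
  have "ddt (St_word (a # w)) = lmul a (St (Dw w)) + scal [:0,1:] (circ a (St (Dw w))) + circ a (St_word w)"
    by (simp add: ddt_add ddt_lmul ddt_scal ddt_circ pd Cons.IH algebra_simps)
  also have "\<dots> = St (lmul a (Dw w)) + circ a (St_word w)"
    by (simp add: St_lmul)
  also have "\<dots> = St (Dw (a # w))"
  proof (cases w)
    case Nil
    then show ?thesis by (simp add: Dw_def)
  next
    case (Cons b w')
    have "Dw (a # w) = mono ((a+b) # w') + (\<Sum>q<length w'. mono (a # merge q (b # w')))"
      unfolding Dw_def Cons by (simp del: sum.lessThan_Suc add: sum.lessThan_Suc_shift)
    moreover have "lmul a (Dw w) = (\<Sum>q<length w'. mono (a # merge q (b # w')))"
      unfolding Dw_def Cons by (simp add: lmul_sum)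
    moreover have "St (mono ((a+b) # w')) = circ a (St_word w)"
      unfolding Cons by (simp add: circ_add circ_scal circ_lmul circ_circ)
    ultimately show ?thesis by (simp add: St_add)
  qed
  finally show ?case .
qed

lemma ddt_St_mono: "ddt (St (mono v)) = St (Dw v)"
  by (simp add: ddt_St_word)



lemma sum_rot_shift:
  "(\<Sum>p<length w. H (rotate (c + p) w)) = (\<Sum>p<length w. (H (rotate p w) :: elt))"
proof (induction c arbitrary: H)
  case 0 then show ?case by simp
next
  case (Suc c)
  define K where "K p = H (rotate (c + p) w)" for p
  have per: "K (length w) = K 0"
    unfolding K_def by (metis add.right_neutral mod_add_self2 rotate_conv_mod)
  have "(\<Sum>p<length w. H (rotate (Suc c + p) w)) = (\<Sum>p<length w. K (Suc p))"
    by (simp add: K_def)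
  also have "\<dots> = (\<Sum>p<length w. K p)"
    using sum.lessThan_Suc_shift[of K "length w"] sum.lessThan_Suc[of K "length w"] per by simp
  also have "\<dots> = (\<Sum>p<length w. H (rotate p w))"
    unfolding K_def by (rule Suc.IH)
  finally show ?case .
qed

lemma CYC:
  fixes G :: "word \<Rightarrow> nat \<Rightarrow> elt"
  assumes n: "n = length w"
  shows "(\<Sum>p<n. \<Sum>l<n-2. G (rotate (l+2) (rotate p w)) (n-2-l)) =
         (\<Sum>i<n. \<Sum>q<n-2. G (rotate i w) (Suc q))"
proof -
  have "(\<Sum>p<n. \<Sum>l<n-2. G (rotate (l+2) (rotate p w)) (n-2-l)) =
        (\<Sum>l<n-2. \<Sum>p<n. G (rotate (l+2) (rotate p w)) (n-2-l))"
    by (rule sum.swap)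
  also have "\<dots> = (\<Sum>q<n-2. \<Sum>p<n. G (rotate ((n-2 - Suc q)+2) (rotate p w)) (n-2-(n-2 - Suc q)))"
    by (rule sum.nat_diff_reindex[symmetric])
  also have "\<dots> = (\<Sum>q<n-2. \<Sum>p<n. G (rotate ((n-2 - Suc q)+2 + p) w) (Suc q))"
    by (rule sum.cong) (auto simp: rotate_rotate Suc_diff_Suc)
  also have "\<dots> = (\<Sum>q<n-2. \<Sum>p<n. G (rotate p w) (Suc q))"
    by (rule sum.cong[OF refl], unfold n, rule sum_rot_shift)
  also have "\<dots> = (\<Sum>i<n. \<Sum>q<n-2. G (rotate i w) (Suc q))"
    by (rule sum.swap)
  finally show ?thesis .
qed

lemma ROTM:
  assumes "length v = n" "l < n - 2"
  shows "rotate (Suc l) (merge 0 v) = merge (n-2-l) (rotate (l+2) v)"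
proof -
  obtain a b u where v: "v = a # b # u"
    using assms by (cases v; cases "tl v") auto
  have lu: "l < length u" using assms v by simp
  have "rotate (Suc l) (merge 0 v) = drop l u @ (a+b) # take l u"
    using lu by (simp del: rotate_Suc add: v rotate_drop_take)
  moreover have "rotate (l+2) v = drop l u @ a # b # take l u"
    using lu by (simp del: rotate_Suc add: v rotate_drop_take)
  moreover have "n - 2 - l = length (drop l u)" using assms v by simp
  ultimately show ?thesis by (metis merge_app)
qed



definition inc :: "word \<Rightarrow> word" where "inc r = (hd r + 1) # tl r"
definition SG :: "word \<Rightarrow> elt" where
  "SG r = (\<Sum>j\<in>{1..<hd r}. mono ((hd r + 1 - j) # tl r @ [j]))"
definition Mx :: "word \<Rightarrow> word" where "Mx r = (r!0 + r!1) # drop 2 r"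

lemma C_word_eq: "C_word w = (\<Sum>i<length w. mono (inc (rotate i w)))"
  by (simp add: C_word_def Let_def inc_def)
lemma Sigma_word_eq: "Sigma_word w = (\<Sum>i<length w. SG (rotate i w))"
  by (simp add: Sigma_word_def Let_def SG_def)
lemma delta_word_eq: "delta_word w = (\<Sum>i<length w. mono (Mx (rotate i w)))"
  by (simp add: delta_word_def Let_def Mx_def)

lemma Dw_split1: "length v = Suc (Suc m) \<Longrightarrow>
   Dw v = mono (merge 0 v) + (\<Sum>q<m. mono (merge (Suc q) v))"
  unfolding Dw_def by (simp del: sum.lessThan_Suc add: sum.lessThan_Suc_shift)

lemma sum_split1: "(\<Sum>l<Suc m. f l) = f 0 + (\<Sum>l<m. f (Suc l))"
  by (simp del: sum.lessThan_Suc add: sum.lessThan_Suc_shift)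

lemma Mx_merge: "2 \<le> length r \<Longrightarrow> Mx r = merge 0 r"
  by (cases r; cases "tl r") (auto simp: Mx_def)

lemma length_Mx: "2 \<le> length r \<Longrightarrow> length (Mx r) = length r - 1"
  by (simp add: Mx_def)

lemma inc_merge0: "2 \<le> length r \<Longrightarrow> inc (merge 0 r) = merge 0 (inc r)"
  by (cases r; cases "tl r") (auto simp: inc_def)

lemma inc_mergeS: "v \<noteq> [] \<Longrightarrow> inc (merge (Suc q) v) = merge (Suc q) (inc v)"
  by (cases v) (auto simp: inc_def)

lemma ident1:
  assumes n: "n = length w" "2 \<le> n"
  shows "(\<Sum>i<n. Dw (inc (rotate i w))) = (\<Sum>p<n. C_word (Mx (rotate p w)))"
proof -
  define G where "G v q = mono (merge q (inc v))" for v q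
  have L: "Dw (inc (rotate i w)) = mono (merge 0 (inc (rotate i w))) + (\<Sum>q<n-2. G (rotate i w) (Suc q))" for i
  proof -
    have "length (inc (rotate i w)) = Suc (Suc (n-2))" using n by (auto simp: inc_def)
    from Dw_split1[OF this] show ?thesis by (simp add: G_def)
  qed
  have R: "C_word (Mx (rotate p w)) = mono (merge 0 (inc (rotate p w))) +
     (\<Sum>l<n-2. G (rotate (l+2) (rotate p w)) (n-2-l))" for p
  proof -
    let ?r = "rotate p w"
    have lr: "length ?r = n" using n by simp
    have lm: "length (Mx ?r) = Suc (n-2)" using n by (simp add: length_Mx)
    have "C_word (Mx ?r) = mono (inc (rotate 0 (Mx ?r))) + (\<Sum>l<n-2. mono (inc (rotate (Suc l) (Mx ?r))))"
      unfolding C_word_eq lm by (rule sum_split1)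
    also have "mono (inc (rotate 0 (Mx ?r))) = mono (merge 0 (inc ?r))"
      using lr n by (simp add: Mx_merge inc_merge0)
    also have "(\<Sum>l<n-2. mono (inc (rotate (Suc l) (Mx ?r)))) = (\<Sum>l<n-2. G (rotate (l+2) ?r) (n-2-l))"
    proof (rule sum.cong[OF refl])
      fix l assume l: "l \<in> {..<n-2}"
      have "rotate (Suc l) (Mx ?r) = merge (Suc (n-3-l)) (rotate (l+2) ?r)"
        using ROTM[OF lr, of l] l n by (simp add: Mx_merge Suc_diff_Suc numeral_eq_Suc del: rotate_Suc)
      moreover have "rotate (l+2) ?r \<noteq> []" using n by auto
      moreover have "n - 2 - l = Suc (n-3-l)" using l by simp
      ultimately show "mono (inc (rotate (Suc l) (Mx ?r))) = G (rotate (l+2) ?r) (n-2-l)"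
        by (simp add: G_def inc_mergeS del: rotate_Suc)
    qed
    finally show ?thesis .
  qed
  show ?thesis
    unfolding L R sum.distrib using CYC[OF n(1), of G] by simp
qed



definition T :: "word \<Rightarrow> nat \<Rightarrow> word" where "T r j = (hd r + 1 - j) # tl r @ [j]"

lemma SG_T: "SG r = (\<Sum>j\<in>{1..<hd r}. mono (T r j))"
  by (simp add: SG_def T_def)

lemma merge_snoc: "Suc q < length u \<Longrightarrow> merge q (u @ [j]) = merge q u @ [j]"
  by (simp add: merge_def nth_append)

lemma sum_split_last: "(\<Sum>l<Suc m. f l) = (\<Sum>l<m. f l) + f m"
  by simp

lemma split_range:
  fixes f :: "nat \<Rightarrow> 'a::comm_monoid_add"
  assumes "1 \<le> a" "1 \<le> b"
  shows "(\<Sum>j\<in>{1..<a+b}. f j) = (\<Sum>j\<in>{1..<a}. f j) + f a + (\<Sum>j\<in>{1..<b}. f (a + j)) "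
proof -
  have "(\<Sum>j\<in>{1..<a+b}. f j) = (\<Sum>j\<in>{1..<a}. f j) + (\<Sum>j\<in>{a..<a+b}. f j)"
    using assms sum.atLeastLessThan_concat[of 1 a "a+b" f] by simp
  also have "(\<Sum>j\<in>{a..<a+b}. f j) = f a + (\<Sum>j\<in>{Suc a..<a+b}. f j)"
    using assms by (simp add: sum.atLeast_Suc_lessThan)
  also have "(\<Sum>j\<in>{Suc a..<a+b}. f j) = (\<Sum>j\<in>{1+a..<b+a}. f j)" by (simp add: add.commute)
  also have "\<dots> = (\<Sum>j\<in>{1..<b}. f (j + a))" by (rule sum.shift_bounds_nat_ivl)
  finally show ?thesis by (simp add: add_ac)
qed

lemma PER:
  assumes r: "r = a # b # u" "1 \<le> a" "1 \<le> b"
  shows "SG (Mx r) = (\<Sum>j\<in>{1..<hd r}. mono (merge 0 (T r j)))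
     + (\<Sum>j\<in>{1..<hd (rotate 1 r)}. mono (merge (length r - 1) (T (rotate 1 r) j)))
     + mono (inc (rotate 1 r))"
proof -
  let ?f = "\<lambda>j. mono ((a+b+1-j) # u @ [j])"
  have "SG (Mx r) = (\<Sum>j\<in>{1..<a+b}. ?f j)"
    by (simp add: SG_def Mx_def r)
  also have "\<dots> = (\<Sum>j\<in>{1..<a}. ?f j) + ?f a + (\<Sum>j\<in>{1..<b}. ?f (a + j))"
    by (rule split_range[OF r(2,3)])
  also have "(\<Sum>j\<in>{1..<a}. ?f j) = (\<Sum>j\<in>{1..<hd r}. mono (merge 0 (T r j)))"
    by (rule sum.cong) (auto simp: r T_def)
  also have "?f a = mono (inc (rotate 1 r))"
    by (simp add: r inc_def)
  also have "(\<Sum>j\<in>{1..<b}. ?f (a + j)) = (\<Sum>j\<in>{1..<hd (rotate 1 r)}. mono (merge (length r - 1) (T (rotate 1 r) j)))"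
  proof (rule sum.cong)
    fix j assume "j \<in> {1..<hd (rotate 1 r)}"
    have "merge (length r - 1) (T (rotate 1 r) j) = (b+1-j) # merge (length u) (u @ a # j # [])"
      by (simp add: r T_def)
    also have "\<dots> = (b+1-j) # u @ [a + j]" by (simp add: merge_app)
    finally show "?f (a + j) = mono (merge (length r - 1) (T (rotate 1 r) j))" by simp
  qed (simp add: r)
  finally show ?thesis by (simp add: algebra_simps)
qed



lemma ident2:
  assumes n: "n = length w" "2 \<le> n" and pos: "\<forall>a\<in>set w. 1 \<le> a"
  shows "(\<Sum>i<n. \<Sum>j\<in>{1..<hd (rotate i w)}. Dw (T (rotate i w) j)) + (\<Sum>i<n. mono (inc (rotate i w)))
       = (\<Sum>p<n. Sigma_word (Mx (rotate p w)))"
proof -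
  define G where "G v q = SG (merge q v)" for v q
  define A where "A r = (\<Sum>j\<in>{1..<hd r}. mono (merge 0 (T r j)))" for r
  define B where "B r = (\<Sum>j\<in>{1..<hd r}. mono (merge (n - 1) (T r j)))" for r
  define I where "I r = mono (inc r)" for r
  have L: "(\<Sum>j\<in>{1..<hd r}. Dw (T r j)) = A r + (\<Sum>q<n-2. G r (Suc q)) + B r"
    if lr: "length r = n" for r
  proof -
    obtain c u where r: "r = c # u" using lr n by (cases r) auto
    have lu: "length u = n - 1" using lr r by simp
    have D: "Dw (T r j) = mono (merge 0 (T r j)) + (\<Sum>q<n-2. mono (merge (Suc q) (T r j))) + mono (merge (n-1) (T r j))" for j
    proof -
      have "length (T r j) = Suc (Suc (n-1))" using lr n by (simp add: T_def r)
      from Dw_split1[OF this] have "Dw (T r j) = mono (merge 0 (T r j)) + (\<Sum>q<Suc (n-2). mono (merge (Suc q) (T r j)))"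
        using n by (simp add: Suc_diff_Suc numeral_eq_Suc)
      also have "\<dots> = mono (merge 0 (T r j)) + (\<Sum>q<n-2. mono (merge (Suc q) (T r j))) + mono (merge (Suc (n-2)) (T r j))"
        by (simp add: add.assoc)
      also have "Suc (n-2) = n - 1" using n by simp
      finally show ?thesis .
    qed
    have M: "(\<Sum>j\<in>{1..<hd r}. \<Sum>q<n-2. mono (merge (Suc q) (T r j))) = (\<Sum>q<n-2. G r (Suc q))"
    proof -
      have "(\<Sum>j\<in>{1..<hd r}. \<Sum>q<n-2. mono (merge (Suc q) (T r j))) = (\<Sum>q<n-2. \<Sum>j\<in>{1..<hd r}. mono (merge (Suc q) (T r j)))"
        by (rule sum.swap)
      also have "\<dots> = (\<Sum>q<n-2. G r (Suc q))"
      proof (rule sum.cong[OF refl])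
        fix q assume q: "q \<in> {..<n-2}"
        then have "Suc q < length u" using lu by auto
        then show "(\<Sum>j\<in>{1..<hd r}. mono (merge (Suc q) (T r j))) = G r (Suc q)"
          by (simp add: G_def SG_def T_def r merge_snoc)
      qed
      finally show ?thesis .
    qed
    show ?thesis unfolding D sum.distrib M A_def B_def by simp
  qed
  have R: "Sigma_word (Mx r) = SG (Mx r) + (\<Sum>l<n-2. G (rotate (l+2) r) (n-2-l))"
    if lr: "length r = n" for r
  proof -
    have lm: "length (Mx r) = Suc (n-2)" using n lr by (simp add: length_Mx)
    have "Sigma_word (Mx r) = SG (rotate 0 (Mx r)) + (\<Sum>l<n-2. SG (rotate (Suc l) (Mx r)))"
      unfolding Sigma_word_eq lm by (rule sum_split1)
    also have "(\<Sum>l<n-2. SG (rotate (Suc l) (Mx r))) = (\<Sum>l<n-2. G (rotate (l+2) r) (n-2-l))"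
    proof (rule sum.cong[OF refl])
      fix l assume l: "l \<in> {..<n-2}"
      have "rotate (Suc l) (Mx r) = merge (n-2-l) (rotate (l+2) r)"
        using ROTM[OF lr, of l] l n lr by (simp add: Mx_merge del: rotate_Suc)
      then show "SG (rotate (Suc l) (Mx r)) = G (rotate (l+2) r) (n-2-l)"
        by (simp add: G_def)
    qed
    finally show ?thesis by simp
  qed
  have P: "SG (Mx (rotate p w)) = A (rotate p w) + B (rotate (1+p) w) + I (rotate (1+p) w)" for p
  proof -
    let ?r = "rotate p w"
    have lr: "length ?r = n" using n by simp
    obtain a b u where r: "?r = a # b # u" using lr n
      by (cases ?r; cases "tl ?r") auto
    have "a \<in> set w" "b \<in> set w" using r by (metis list.set_intros set_rotate)+
    then have ab: "1 \<le> a" "1 \<le> b" using pos by auto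
    have "length ?r - 1 = n - 1" using lr by simp
    from PER[OF r ab] this show ?thesis
      by (simp add: A_def B_def I_def rotate_rotate del: rotate_Suc)
  qed
  have "(\<Sum>p<n. Sigma_word (Mx (rotate p w))) =
        (\<Sum>p<n. SG (Mx (rotate p w))) + (\<Sum>p<n. \<Sum>l<n-2. G (rotate (l+2) (rotate p w)) (n-2-l))"
    using R n by (simp add: sum.distrib)
  also have "(\<Sum>p<n. \<Sum>l<n-2. G (rotate (l+2) (rotate p w)) (n-2-l)) = (\<Sum>i<n. \<Sum>q<n-2. G (rotate i w) (Suc q))"
    by (rule CYC[OF n(1)])
  also have "(\<Sum>p<n. SG (Mx (rotate p w))) = (\<Sum>p<n. A (rotate p w)) + (\<Sum>p<n. B (rotate (1+p) w)) + (\<Sum>p<n. I (rotate (1+p) w))"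
    unfolding P by (simp add: sum.distrib)
  also have "(\<Sum>p<n. B (rotate (1+p) w)) = (\<Sum>p<n. B (rotate p w))"
    unfolding n by (rule sum_rot_shift)
  also have "(\<Sum>p<n. I (rotate (1+p) w)) = (\<Sum>p<n. I (rotate p w))"
    unfolding n by (rule sum_rot_shift)
  finally have RHS: "(\<Sum>p<n. Sigma_word (Mx (rotate p w))) = (\<Sum>p<n. A (rotate p w)) + (\<Sum>p<n. B (rotate p w)) + (\<Sum>p<n. I (rotate p w)) + (\<Sum>i<n. \<Sum>q<n-2. G (rotate i w) (Suc q))" .
  have "(\<Sum>i<n. \<Sum>j\<in>{1..<hd (rotate i w)}. Dw (T (rotate i w) j)) = (\<Sum>i<n. A (rotate i w) + (\<Sum>q<n-2. G (rotate i w) (Suc q)) + B (rotate i w))"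
    by (rule sum.cong[OF refl]) (use L n in simp)
  then show ?thesis unfolding RHS by (simp add: sum.distrib I_def algebra_simps)
qed



lemma St_word_single: "St_word [a] = mono [a]"
  by simp

theorem lemma5p3:
  fixes w :: word
  assumes "w \<noteq> []" and "\<forall>a\<in>set w. 1 \<le> a"
  defines "k \<equiv> sum_list w"
  shows "(ddt (St (Cop (mono w))) =
           (if length w = 1 then 0 else St (Cop (deltaop (mono w))))) \<and>
         (ddt (St (Sigmaop (mono w))) =
           (if length w = 1 then Poly_Mapping.single [k + 1] (of_nat k - 1)
            else St (Sigmaop (deltaop (mono w))) - St (Cop (mono w))))"
proof (cases "length w = 1")
  case True
  then obtain a where w: "w = [a]" by (cases w) (auto simp: length_Suc_conv)
  have a: "1 \<le> a" using assms(2) w by simp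
  have k: "k = a" by (simp add: k_def w)
  have C: "Cop (mono w) = mono [a+1]"
    by (simp add: Cop_def C_word_eq w inc_def)
  have S: "Sigmaop (mono w) = (\<Sum>j\<in>{1..<a}. mono [a + 1 - j, j])"
    by (simp add: Sigmaop_def Sigma_word_eq w SG_def)
  have "ddt (St (Sigmaop (mono w))) = (\<Sum>j\<in>{1..<a}. St (Dw [a + 1 - j, j]))"
    by (simp only: S St_sum ddt_sum ddt_St_mono)
  also have "\<dots> = (\<Sum>j\<in>{1..<a}. mono [a+1])"
    by (rule sum.cong[OF refl]) (auto simp: Dw_def)
  also have "\<dots> = Poly_Mapping.single [k + 1] (of_nat k - 1)"
  proof (rule poly_mapping_eqI)
    fix u
    show "Poly_Mapping.lookup (\<Sum>j\<in>{1..<a}. mono [a+1]) u = Poly_Mapping.lookup (Poly_Mapping.single [k + 1] (of_nat k - 1)) u"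
      using a by (simp add: lookup_sum mono_def lookup_single when_def k of_nat_diff)
  qed
  finally show ?thesis using True C by (simp add: ddt_St_mono Dw_def)
next
  case False
  define n where "n = length w"
  have n2: "2 \<le> n" using False assms(1) n_def by (cases w) (auto simp: Suc_le_eq)
  have CW: "Cop (mono w) = (\<Sum>i<n. mono (inc (rotate i w)))"
    by (simp add: Cop_def C_word_eq n_def)
  have CD: "Cop (deltaop (mono w)) = (\<Sum>p<n. C_word (Mx (rotate p w)))"
    by (simp add: Cop_def deltaop_def delta_word_eq n_def lin_sum)
  have SD: "Sigmaop (deltaop (mono w)) = (\<Sum>p<n. Sigma_word (Mx (rotate p w)))"
    by (simp add: Sigmaop_def deltaop_def delta_word_eq n_def lin_sum)
  have SW: "Sigmaop (mono w) = (\<Sum>i<n. \<Sum>j\<in>{1..<hd (rotate i w)}. mono (T (rotate i w) j))"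
    by (simp add: Sigmaop_def Sigma_word_eq n_def SG_T)
  have 1: "ddt (St (Cop (mono w))) = St (Cop (deltaop (mono w)))"
    unfolding CW CD ident1[OF n_def n2, symmetric]
    by (simp add: St_sum ddt_sum ddt_St_word)
  have "ddt (St (Sigmaop (mono w))) = St (\<Sum>i<n. \<Sum>j\<in>{1..<hd (rotate i w)}. Dw (T (rotate i w) j))"
    unfolding SW by (simp add: St_sum ddt_sum ddt_St_word)
  also have "\<dots> = St (Sigmaop (deltaop (mono w))) - St (Cop (mono w))"
    unfolding SD CW ident2[OF n_def n2 assms(2), symmetric] by (simp add: St_add)
  finally show ?thesis using 1 False by simp
qed

end
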